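(* Let $\mathcal A$ be a unital C*-algebra with centre $\mathcal Z$, $\rho$ a unital endomorphism of $\mathcal A$ with weak permutation symmetry $\varepsilon$ and dimension $d\ge2$, and $\mathcal B$ a minimal crossed product of $\mathcal A$ by $\rho$, with isometries $\psi_1,\dots,\psi_d$ and endomorphism $\sigma$. Let $E=\mathrm{span}\{\psi_if: i=1,\dots,d,\ f\in C(X^\rho)\}\subseteq\mathcal B$. Then $E=(\iota_{\mathcal B},\sigma):=\{b\in\mathcal B:\sigma(b')b=bb'\ \forall b'\in\mathcal B\}$.
   Context: For a unital endomorphism $\rho$ of $\mathcal A$: $(\rho^r,\rho^s)=\{t\in\mathcal A:\rho^s(a)t=t\rho^r(a)\ \forall a\in\mathcal A\}$ ($\rho^0=\mathrm{id}$). $\mathcal Z^\rho=\{f\in\mathcal Z:\rho(f)=f\}$, and $X^\rho$ is its spectrum, so $\mathcal Z^\rho\cong C(X^\rho)$. $\mathbb P_\infty$ is the group of finite permutations of $\mathbb N=\{1,2,\dots\}$, $\mathbb P_n$ those of $\{1,\dots,n\}$, and $\mathbb S$ the shift $(\mathbb Sp)(1)=1$, $(\mathbb Sp)(n)=1+p(n-1)$. A weak permutation symmetry (WPS) of $\rho$ is a unitary representation $p\mapsto\varepsilon(p)$ of $\mathbb P_\infty$ in $\mathcal A$ with $\varepsilon(\mathbb Sp)=\rho(\varepsilon(p))$ and $\varepsilon(p)\in(\rho^n,\rho^n)$ for $p\in\mathbb P_n$; $d$ denotes the (Doplicher–Roberts) dimension of $(\rho,\varepsilon)$. Let $\mathcal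 O_d$ be the Cuntz algebra on $d$ generators and, for $p\in\mathbb P_n$, $\theta(p)\in\mathcal O_d$ the unitary implementing the permutation $p$ of the tensor factors of $H^{\otimes n}$ ($H=\mathbb C^d$), written in the canonical generators. A minimal crossed product (mCP) of $\mathcal A$ by $\rho$ is a unital C*-algebra $\mathcal B\supseteq\mathcal A$ such that: (1) $\mathcal B$ is generated by $\mathcal A$ and isometries $\psi_1,\dots,\psi_d$ with $\psi_i^*\psi_j=\delta_{ij}1$, $\sum_i\psi_i\psi_i^*=1$ (giving a monomorphism $j:\mathcal O_d\to\mathcal B$), and one sets $\sigma(b)=\sum_i\psi_ib\psi_i^*$, $b\in\mathcal B$; (2) $\sigma(a)=\rho(a)$ for $a\in\mathcal A$; (3) $\mathcal A'\cap\mathcal B=\mathcal Z$; (4) $j(\theta(p))=\varepsilon(p)$ for all $p\in\mathbb P_\infty$. *)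

theory Defs
  imports "HOL-Analysis.Analysis"
begin

class cstar_algebra = real_normed_algebra_1 + banach +
  fixes scaleC :: "complex \<Rightarrow> 'a \<Rightarrow> 'a"
    and adj :: "'a \<Rightarrow> 'a"
  assumes scaleC_add_right: "scaleC c (x + y) = scaleC c x + scaleC c y"
    and scaleC_add_left: "scaleC (c + e) x = scaleC c x + scaleC e x"
    and scaleC_scaleC: "scaleC c (scaleC e x) = scaleC (c * e) x"
    and scaleC_one: "scaleC 1 x = x"
    and scaleR_scaleC: "scaleR r x = scaleC (complex_of_real r) x"
    and norm_scaleC: "norm (scaleC c x) = cmod c * norm x"
    and mult_scaleC_left: "scaleC c x * y = scaleC c (x * y)"
    and mult_scaleC_right: "x * scaleC c y = scaleC c (x * y)"
    and adj_adj: "adj (adj x) = x"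
    and adj_add: "adj (x + y) = adj x + adj y"
    and adj_scaleC: "adj (scaleC c x) = scaleC (cnj c) (adj x)"
    and adj_mult: "adj (x * y) = adj y * adj x"
    and cstar_identity: "norm (adj x * x) = (norm x)\<^sup>2"

definition csubalg :: "'a::cstar_algebra set \<Rightarrow> bool" where
  "csubalg S \<longleftrightarrow> 1 \<in> S \<and> closed S \<and>
     (\<forall>x\<in>S. \<forall>y\<in>S. x + y \<in> S \<and> x * y \<in> S) \<and>
     (\<forall>c. \<forall>x\<in>S. scaleC c x \<in> S) \<and> (\<forall>x\<in>S. adj x \<in> S)"

definition cstar_span :: "'a::cstar_algebra set \<Rightarrow> 'a set" where
  "cstar_span S = {(\<Sum>k<(n::nat). scaleC (c k) (v k)) | n c v. \<forall>k<n. v k \<in> S}"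

definition cunitary :: "'a::cstar_algebra \<Rightarrow> bool" where
  "cunitary u \<longleftrightarrow> adj u * u = 1 \<and> u * adj u = 1"

definition cisometry :: "'a::cstar_algebra \<Rightarrow> bool" where
  "cisometry v \<longleftrightarrow> adj v * v = 1"

definition centre :: "'a::cstar_algebra set \<Rightarrow> 'a set" where
  "centre A = {z \<in> A. \<forall>a\<in>A. z * a = a * z}"

definition unital_endo :: "'a::cstar_algebra set \<Rightarrow> ('a \<Rightarrow> 'a) \<Rightarrow> bool" where
  "unital_endo A \<rho> \<longleftrightarrow> (\<forall>a\<in>A. \<rho> a \<in> A) \<and> \<rho> 1 = 1 \<and>
     (\<forall>a\<in>A. \<forall>b\<in>A. \<rho> (a + b) = \<rho> a + \<rho> b \<and> \<rho> (a * b) = \<rho> a * \<rho> b) \<and>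
     (\<forall>c. \<forall>a\<in>A. \<rho> (scaleC c a) = scaleC c (\<rho> a)) \<and>
     (\<forall>a\<in>A. \<rho> (adj a) = adj (\<rho> a))"

definition intertw :: "'a::cstar_algebra set \<Rightarrow> ('a \<Rightarrow> 'a) \<Rightarrow> nat \<Rightarrow> nat \<Rightarrow> 'a set" where
  "intertw A \<rho> r s = {t \<in> A. \<forall>a\<in>A. (\<rho>^^s) a * t = t * (\<rho>^^r) a}"

text \<open>Fixed-point algebra Z^rho of the centre; identified with C(X^rho) via Gelfand.\<close>
definition centre_fix :: "'a::cstar_algebra set \<Rightarrow> ('a \<Rightarrow> 'a) \<Rightarrow> 'a set" where
  "centre_fix A \<rho> = {f \<in> centre A. \<rho> f = f}"

text \<open>Permutations of {1,2,...} are encoded as bijections of nat fixing 0.\<close>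
definition finperm :: "(nat \<Rightarrow> nat) \<Rightarrow> bool" where
  "finperm p \<longleftrightarrow> bij p \<and> p 0 = 0 \<and> finite {k. p k \<noteq> k}"

definition permn :: "nat \<Rightarrow> (nat \<Rightarrow> nat) \<Rightarrow> bool" where
  "permn n p \<longleftrightarrow> finperm p \<and> (\<forall>k>n. p k = k)"

definition shiftp :: "(nat \<Rightarrow> nat) \<Rightarrow> nat \<Rightarrow> nat" where
  "shiftp p = (\<lambda>k. if k \<le> 1 then k else 1 + p (k - 1))"

definition WPS :: "'a::cstar_algebra set \<Rightarrow> ('a \<Rightarrow> 'a) \<Rightarrow> ((nat \<Rightarrow> nat) \<Rightarrow> 'a) \<Rightarrow> bool" where
  "WPS A \<rho> \<epsilon> \<longleftrightarrow>
     (\<forall>p. finperm p \<longrightarrow> \<epsilon> p \<in> A \<and> cunitary (\<epsilon> p)) \<and>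
     (\<forall>p q. finperm p \<longrightarrow> finperm q \<longrightarrow> \<epsilon> (p \<circ> q) = \<epsilon> p * \<epsilon> q) \<and>
     (\<forall>p. finperm p \<longrightarrow> \<epsilon> (shiftp p) = \<rho> (\<epsilon> p)) \<and>
     (\<forall>n p. permn n p \<longrightarrow> \<epsilon> p \<in> intertw A \<rho> n n)"

primrec psiword :: "(nat \<Rightarrow> 'a::cstar_algebra) \<Rightarrow> (nat \<Rightarrow> nat) \<Rightarrow> nat \<Rightarrow> 'a" where
  "psiword \<psi> I 0 = 1"
| "psiword \<psi> I (Suc n) = psiword \<psi> I n * \<psi> (I (Suc n))"

text \<open>Multi-indices of length n with entries in {0..<d} (generators indexed by i < d).\<close>
definition multiidx :: "nat \<Rightarrow> nat \<Rightarrow> (nat \<Rightarrow> nat) set" where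
  "multiidx d n = {I. (\<forall>k\<in>{1..n}. I k < d) \<and> (\<forall>k. k \<notin> {1..n} \<longrightarrow> I k = 0)}"

text \<open>Image under j of thetaB(p), p in P_n: the cunitary sending
  e_{i_1} (x) ... (x) e_{i_n} to e_{i_{p^-1(1)}} (x) ... (x) e_{i_{p^-1(n)}}.\<close>
definition thetaB :: "(nat \<Rightarrow> 'a::cstar_algebra) \<Rightarrow> nat \<Rightarrow> nat \<Rightarrow> (nat \<Rightarrow> nat) \<Rightarrow> 'a" where
  "thetaB \<psi> d n p = (\<Sum>I\<in>multiidx d n. psiword \<psi> (I \<circ> inv p) n * adj (psiword \<psi> I n))"

definition sigmaB :: "(nat \<Rightarrow> 'a::cstar_algebra) \<Rightarrow> nat \<Rightarrow> 'a \<Rightarrow> 'a" where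
  "sigmaB \<psi> d b = (\<Sum>i<d. \<psi> i * b * adj (\<psi> i))"

text \<open>The ambient algebra (the type) is B; A is a unital C*-subalgebra.\<close>
definition mCP :: "'a::cstar_algebra set \<Rightarrow> ('a \<Rightarrow> 'a) \<Rightarrow> ((nat \<Rightarrow> nat) \<Rightarrow> 'a)
    \<Rightarrow> nat \<Rightarrow> (nat \<Rightarrow> 'a) \<Rightarrow> bool" where
  "mCP A \<rho> \<epsilon> d \<psi> \<longleftrightarrow>
     (\<forall>S. csubalg S \<and> A \<subseteq> S \<and> (\<forall>i<d. \<psi> i \<in> S) \<longrightarrow> S = UNIV) \<and>
     (\<forall>i<d. \<forall>j<d. adj (\<psi> i) * \<psi> j = (if i = j then 1 else 0)) \<and>
     (\<Sum>i<d. \<psi> i * adj (\<psi> i)) = 1 \<and>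
     (\<forall>a\<in>A. sigmaB \<psi> d a = \<rho> a) \<and>
     {b. \<forall>a\<in>A. a * b = b * a} = centre A \<and>
     (\<forall>n p. permn n p \<longrightarrow> thetaB \<psi> d n p = \<epsilon> p)"

end

theory Submission
  imports Defs
begin

lemma sig_right:
  assumes orth: "\<forall>i<d. \<forall>j<d. adj (\<psi> i) * \<psi> j = (if i = j then 1 else 0)"
    and k: "k < d"
  shows "sigmaB \<psi> d x * \<psi> k = \<psi> k * x"
proof -
  have "sigmaB \<psi> d x * \<psi> k = (\<Sum>j<d. \<psi> j * x * (adj (\<psi> j) * \<psi> k))"
    unfolding sigmaB_def by (simp add: sum_distrib_right mult.assoc)
  also have "\<dots> = (\<Sum>j<d. if j = k then \<psi> k * x else 0)"
    by (rule sum.cong) (use orth k in auto)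
  also have "\<dots> = \<psi> k * x" using k by simp
  finally show ?thesis .
qed

lemma sig_left:
  assumes orth: "\<forall>i<d. \<forall>j<d. adj (\<psi> i) * \<psi> j = (if i = j then 1 else 0)"
    and k: "k < d"
  shows "adj (\<psi> k) * sigmaB \<psi> d x = x * adj (\<psi> k)"
proof -
  have "adj (\<psi> k) * sigmaB \<psi> d x = (\<Sum>j<d. (adj (\<psi> k) * \<psi> j) * x * adj (\<psi> j))"
    unfolding sigmaB_def by (simp add: sum_distrib_left mult.assoc)
  also have "\<dots> = (\<Sum>j<d. if j = k then x * adj (\<psi> k) else 0)"
    by (rule sum.cong) (use orth k in auto)
  also have "\<dots> = x * adj (\<psi> k)" using k by simp
  finally show ?thesis .
qed

lemma span_closed:
  assumes "\<forall>k<n. v k \<in> {b. \<forall>b'. sigmaB \<psi> d b' * b = b * b'}"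
  shows "(\<Sum>k<(n::nat). scaleC (c k) (v k)) \<in> {b. \<forall>b'. sigmaB \<psi> d b' * b = b * b'}"
proof -
  { fix b'
    have "sigmaB \<psi> d b' * (\<Sum>k<n. scaleC (c k) (v k)) = (\<Sum>k<n. scaleC (c k) (sigmaB \<psi> d b' * v k))"
      by (simp add: sum_distrib_left mult_scaleC_right)
    also have "\<dots> = (\<Sum>k<n. scaleC (c k) (v k * b'))"
      using assms by (intro sum.cong) auto
    also have "\<dots> = (\<Sum>k<n. scaleC (c k) (v k)) * b'"
      by (simp add: sum_distrib_right mult_scaleC_left)
    finally have "sigmaB \<psi> d b' * (\<Sum>k<n. scaleC (c k) (v k)) = (\<Sum>k<n. scaleC (c k) (v k)) * b'" . }
  then show ?thesis by simp
qed

lemma centre_fix_comm: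
  fixes A :: "'b::cstar_algebra set"
  assumes A: "csubalg A" and rho: "unital_endo A \<rho>" and m: "mCP A \<rho> \<epsilon> d \<psi>"
    and f: "f \<in> centre_fix A \<rho>"
  shows "f * b = b * f"
proof -
  have orth: "\<forall>i<d. \<forall>j<d. adj (\<psi> i) * \<psi> j = (if i = j then 1 else 0)"
    and sigA: "\<forall>a\<in>A. sigmaB \<psi> d a = \<rho> a"
    and gen: "\<forall>S. csubalg S \<and> A \<subseteq> S \<and> (\<forall>i<d. \<psi> i \<in> S) \<longrightarrow> S = UNIV"
    using m unfolding mCP_def by auto
  have fA: "f \<in> A" and fc: "\<forall>a\<in>A. f * a = a * f" and rf: "\<rho> f = f"
    using f unfolding centre_fix_def centre_def by auto
  have adjA: "\<forall>x\<in>A. adj x \<in> A" using A unfolding csubalg_def by auto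
  have gf: "adj f \<in> centre_fix A \<rho>"
  proof -
    have "\<forall>a\<in>A. adj f * a = a * adj f"
    proof
      fix a assume "a \<in> A"
      then have "f * adj a = adj a * f" using fc adjA by auto
      then have "adj (f * adj a) = adj (adj a * f)" by simp
      then show "adj f * a = a * adj f" by (simp add: adj_mult adj_adj)
    qed
    moreover have "\<rho> (adj f) = adj f" using rho fA rf unfolding unital_endo_def by auto
    ultimately show ?thesis using fA adjA unfolding centre_fix_def centre_def by auto
  qed
  have psicomm: "g * \<psi> k = \<psi> k * g" if "g \<in> centre_fix A \<rho>" "k < d" for g k
  proof -
    have "g \<in> A" "\<rho> g = g" using that unfolding centre_fix_def centre_def by auto
    then have "sigmaB \<psi> d g = g" using sigA by auto
    then show ?thesis using sig_right[OF orth that(2), of g] by simp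
  qed
  define S where "S = {b. f * b = b * f \<and> adj f * b = b * adj f}"
  have "csubalg S"
    unfolding csubalg_def
  proof (intro conjI ballI allI)
    show "1 \<in> S" unfolding S_def by simp
    have "closed {b. f * b = b * f}"
      by (rule closed_Collect_eq) (intro continuous_intros)+
    moreover have "closed {b. adj f * b = b * adj f}"
      by (rule closed_Collect_eq) (intro continuous_intros)+
    ultimately show "closed S" unfolding S_def by (simp add: Collect_conj_eq closed_Int)
  next
    fix x y assume "x \<in> S" "y \<in> S"
    then have h: "f * x = x * f" "adj f * x = x * adj f" "f * y = y * f" "adj f * y = y * adj f"
      unfolding S_def by auto
    have "f * (x * y) = x * y * f" by (metis h(1,3) mult.assoc)
    moreover have "adj f * (x * y) = x * y * adj f" by (metis h(2,4) mult.assoc)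
    ultimately show "x * y \<in> S" unfolding S_def by simp
    show "x + y \<in> S" using h unfolding S_def by (simp add: distrib_left distrib_right)
  next
    fix c x assume "x \<in> S"
    then show "scaleC c x \<in> S" unfolding S_def by (simp add: mult_scaleC_left mult_scaleC_right)
  next
    fix x assume x: "x \<in> S"
    then have "adj (adj f * x) = adj (x * adj f)" "adj (f * x) = adj (x * f)" unfolding S_def by auto
    then show "adj x \<in> S" unfolding S_def by (simp add: adj_mult adj_adj)
  qed
  moreover have "A \<subseteq> S"
    using fc gf unfolding S_def centre_fix_def centre_def by auto
  moreover have "\<forall>i<d. \<psi> i \<in> S" using psicomm f gf unfolding S_def by auto
  ultimately have "S = UNIV" using gen by blast
  then show ?thesis unfolding S_def by auto
qed

theorem mainTheorem2:
  fixes A :: "'b::cstar_algebra set"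
    and \<rho> :: "'b \<Rightarrow> 'b"
    and \<epsilon> :: "(nat \<Rightarrow> nat) \<Rightarrow> 'b"
    and d :: nat
    and \<psi> :: "nat \<Rightarrow> 'b"
  assumes "csubalg A"
    and "unital_endo A \<rho>"
    and "WPS A \<rho> \<epsilon>"
    and "d \<ge> 2"
    and "mCP A \<rho> \<epsilon> d \<psi>"
  shows "cstar_span {\<psi> i * f | i f. i < d \<and> f \<in> centre_fix A \<rho>}
           = {b. \<forall>b'. sigmaB \<psi> d b' * b = b * b'}"
proof -
  have orth: "\<forall>i<d. \<forall>j<d. adj (\<psi> i) * \<psi> j = (if i = j then 1 else 0)"
    and sigA: "\<forall>a\<in>A. sigmaB \<psi> d a = \<rho> a"
    and cun: "(\<Sum>i<d. \<psi> i * adj (\<psi> i)) = 1"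
    and comm: "{b. \<forall>a\<in>A. a * b = b * a} = centre A"
    using assms(5) unfolding mCP_def by auto
  let ?C = "{b. \<forall>b'. sigmaB \<psi> d b' * b = b * b'}"
  have PC: "x \<in> ?C" if xP: "x \<in> {\<psi> i * f | i f. i < d \<and> f \<in> centre_fix A \<rho>}" for x
  proof -
    obtain i f where x: "x = \<psi> i * f" and i: "i < d" and f: "f \<in> centre_fix A \<rho>"
      using xP by blast
    { fix b'
      have "sigmaB \<psi> d b' * (\<psi> i * f) = \<psi> i * b' * f"
        using sig_right[OF orth i] by (simp add: mult.assoc[symmetric])
      also have "\<dots> = \<psi> i * f * b'"
        using centre_fix_comm[OF assms(1,2,5) f, of b'] by (simp add: mult.assoc)
      finally have "sigmaB \<psi> d b' * x = x * b'" using x by simp }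
    then show ?thesis by simp
  qed
  show ?thesis
  proof
    show "cstar_span {\<psi> i * f | i f. i < d \<and> f \<in> centre_fix A \<rho>} \<subseteq> ?C"
    proof
      fix x assume "x \<in> cstar_span {\<psi> i * f | i f. i < d \<and> f \<in> centre_fix A \<rho>}"
      then obtain n c v where x: "x = (\<Sum>k<(n::nat). scaleC (c k) (v k))"
        and v: "\<forall>k<n. v k \<in> {\<psi> i * f | i f. i < d \<and> f \<in> centre_fix A \<rho>}"
        unfolding cstar_span_def by auto
      have "\<forall>k<n. v k \<in> ?C" using v PC by simp
      from span_closed[OF this] show "x \<in> ?C" using x by simp
    qed
  next
    show "?C \<subseteq> cstar_span {\<psi> i * f | i f. i < d \<and> f \<in> centre_fix A \<rho>}"
    proof
      fix b assume b: "b \<in> ?C"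
      define g where "g i = adj (\<psi> i) * b" for i
      have gc: "g i * b' = b' * g i" if "i < d" for i b'
      proof -
        have "g i * b' = adj (\<psi> i) * (sigmaB \<psi> d b' * b)"
          using b unfolding g_def by (simp add: mult.assoc)
        also have "\<dots> = b' * g i"
          using sig_left[OF orth that, of b'] unfolding g_def by (simp add: mult.assoc[symmetric])
        finally show ?thesis .
      qed
      have gfix: "g i \<in> centre_fix A \<rho>" if i: "i < d" for i
      proof -
        have "g i \<in> centre A" using comm gc[OF i] by auto
        then have gA: "g i \<in> A" unfolding centre_def by auto
        have "sigmaB \<psi> d (g i) = (\<Sum>j<d. \<psi> j * adj (\<psi> j)) * g i"
          unfolding sigmaB_def sum_distrib_right
          by (intro sum.cong refl) (simp add: mult.assoc gc[OF i])
        then have "\<rho> (g i) = g i" using sigA gA cun by simp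
        with \<open>g i \<in> centre A\<close> show ?thesis unfolding centre_fix_def by auto
      qed
      have "b = (\<Sum>i<d. \<psi> i * adj (\<psi> i)) * b" using cun by simp
      also have "\<dots> = (\<Sum>k<d. scaleC 1 (\<psi> k * g k))"
        unfolding g_def by (simp add: sum_distrib_right scaleC_one mult.assoc)
      finally have bs: "b = (\<Sum>k<d. scaleC ((\<lambda>_. 1) k) ((\<lambda>k. \<psi> k * g k) k))" by simp
      have mem: "\<forall>k<d. \<psi> k * g k \<in> {\<psi> i * f | i f. i < d \<and> f \<in> centre_fix A \<rho>}"
        using gfix by blast
      have "\<exists>n c v. b = (\<Sum>k<(n::nat). scaleC (c k) (v k)) \<and>
          (\<forall>k<n. v k \<in> {\<psi> i * f | i f. i < d \<and> f \<in> centre_fix A \<rho>})"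
        apply (rule exI[of _ d], rule exI[of _ "\<lambda>_. 1"], rule exI[of _ "\<lambda>k. \<psi> k * g k"])
        using bs mem by simp
      then show "b \<in> cstar_span {\<psi> i * f | i f. i < d \<and> f \<in> centre_fix A \<rho>}"
        unfolding cstar_span_def by (simp only: mem_Collect_eq)
    qed
  qed
qed

end
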